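(* Let $(G,O)$ be an equipped group such that the elements of $O$ generate $G$, and let $\widehat G$ be the associated $C$-group. If $G$ is a perfect group, then $\widehat G$ is isomorphic to the direct product $[\widehat G,\widehat G]\times(\widehat G/[\widehat G,\widehat G])$.
   Context: An equipped group is a pair $(G,O)$, $G$ a group, $O\subset G$ a union of finitely many conjugacy classes, $1\notin O$. The associated $C$-group $\widehat G$ (the $C$-group equivalent to $(G,O)$) is the group with generators $y_g$ ($g\in O$) and relations $y_h^{-1}y_gy_h=y_{h^{-1}gh}$ for all $g,h\in O$. *)

theory Defs
  imports "HOL-Algebra.Algebra"
begin

definition conj_class :: "('a, 'b) monoid_scheme \<Rightarrow> 'a \<Rightarrow> 'a set" where
  "conj_class G g = {inv\<^bsub>G\<^esub> h \<otimes>\<^bsub>G\<^esub> g \<otimes>\<^bsub>G\<^esub> h | h. h \<in> carrier G}"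

definition equipped_group :: "('a, 'b) monoid_scheme \<Rightarrow> 'a set \<Rightarrow> bool" where
  "equipped_group G Oc \<longleftrightarrow> group G \<and> Oc \<subseteq> carrier G \<and> \<one>\<^bsub>G\<^esub> \<notin> Oc \<and>
     (\<exists>S. finite S \<and> S \<subseteq> carrier G \<and> Oc = (\<Union>s\<in>S. conj_class G s))"

definition perfect_group :: "('a, 'b) monoid_scheme \<Rightarrow> bool" where
  "perfect_group G \<longleftrightarrow> derived G (carrier G) = carrier G"

text \<open>Words in the generators y_g (g in Oc): a letter (g, True) stands for y_g,
  (g, False) for y_g^{-1}.\<close>

inductive cgroup_eq :: "('a, 'b) monoid_scheme \<Rightarrow> 'a set \<Rightarrow> ('a \<times> bool) list \<Rightarrow> ('a \<times> bool) list \<Rightarrow> bool"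
  for G Oc where
  refl: "w \<in> lists (Oc \<times> UNIV) \<Longrightarrow> cgroup_eq G Oc w w"
| sym: "cgroup_eq G Oc u v \<Longrightarrow> cgroup_eq G Oc v u"
| trans: "cgroup_eq G Oc u v \<Longrightarrow> cgroup_eq G Oc v w \<Longrightarrow> cgroup_eq G Oc u w"
| cancel: "u \<in> lists (Oc \<times> UNIV) \<Longrightarrow> v \<in> lists (Oc \<times> UNIV) \<Longrightarrow> g \<in> Oc \<Longrightarrow>
     cgroup_eq G Oc (u @ [(g, b), (g, \<not> b)] @ v) (u @ v)"
| rel: "u \<in> lists (Oc \<times> UNIV) \<Longrightarrow> v \<in> lists (Oc \<times> UNIV) \<Longrightarrow> g \<in> Oc \<Longrightarrow> h \<in> Oc \<Longrightarrow>
     cgroup_eq G Oc (u @ [(h, False), (g, True), (h, True)] @ v)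
                   (u @ [(inv\<^bsub>G\<^esub> h \<otimes>\<^bsub>G\<^esub> g \<otimes>\<^bsub>G\<^esub> h, True)] @ v)"

definition cgroup_rel :: "('a, 'b) monoid_scheme \<Rightarrow> 'a set \<Rightarrow> (('a \<times> bool) list \<times> ('a \<times> bool) list) set" where
  "cgroup_rel G Oc = {(u, v). cgroup_eq G Oc u v}"

definition C_group :: "('a, 'b) monoid_scheme \<Rightarrow> 'a set \<Rightarrow> ('a \<times> bool) list set monoid" where
  "C_group G Oc =
    \<lparr> carrier = lists (Oc \<times> UNIV) // cgroup_rel G Oc,
      monoid.mult = (\<lambda>A B. \<Union>x\<in>A. \<Union>y\<in>B. cgroup_rel G Oc `` {x @ y}),
      one = cgroup_rel G Oc `` {[]} \<rparr>"

end

theory Submission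
  imports Defs
begin


locale cgrp = group G for G :: "('a,'b) monoid_scheme" (structure) +
  fixes Oc :: "'a set"
  assumes Oc_sub: "Oc \<subseteq> carrier G"
    and Oc_conj: "\<lbrakk>g \<in> Oc; h \<in> carrier G\<rbrakk> \<Longrightarrow> inv h \<otimes> g \<otimes> h \<in> Oc"
begin

abbreviation "W \<equiv> lists (Oc \<times> (UNIV::bool set))"
abbreviation "R \<equiv> cgroup_rel G Oc"
abbreviation "CG \<equiv> C_group G Oc"
abbreviation "ceq \<equiv> cgroup_eq G Oc"

lemma ceq_W: "ceq u v \<Longrightarrow> u \<in> W \<and> v \<in> W"
proof (induction rule: cgroup_eq.induct)
  case (rel u v g h)
  then have "inv h \<otimes> g \<otimes> h \<in> Oc" using Oc_conj Oc_sub by auto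
  with rel show ?case by auto
qed auto

lemma equiv_R: "equiv W R"
proof -
  have "R \<subseteq> W \<times> W"
  proof
    fix p assume "p \<in> R"
    then obtain a b where "p = (a,b)" "ceq a b" by (auto simp: cgroup_rel_def)
    then show "p \<in> W \<times> W" using ceq_W[of a b] by blast
  qed
  moreover have "\<forall>x\<in>W. (x,x) \<in> R" by (auto simp: cgroup_rel_def intro: cgroup_eq.refl)
  moreover have "sym R" unfolding sym_def cgroup_rel_def by (blast intro: cgroup_eq.sym)
  moreover have "trans R" unfolding trans_def cgroup_rel_def by (blast intro: cgroup_eq.trans)
  ultimately show ?thesis unfolding equiv_def refl_on_def by blast
qed

lemma ceq_app: "ceq u v \<Longrightarrow> w \<in> W \<Longrightarrow> ceq (w @ u) (w @ v) \<and> ceq (u @ w) (v @ w)"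
proof (induction rule: cgroup_eq.induct)
  case (refl u)
  have "w@u \<in> W" "u@w \<in> W" using refl by auto
  then show ?case by (blast intro: cgroup_eq.refl)
next
  case (sym u v) then show ?case by (auto intro: cgroup_eq.sym)
next
  case (trans u v w') then show ?case by (meson cgroup_eq.trans)
next
  case (cancel u v g b)
  have 1: "ceq ((w@u) @ [(g, b), (g, \<not> b)] @ v) ((w@u) @ v)"
    by (rule cgroup_eq.cancel) (use cancel in auto)
  have 2: "ceq (u @ [(g, b), (g, \<not> b)] @ (v@w)) (u @ (v@w))"
    by (rule cgroup_eq.cancel) (use cancel in auto)
  from 1 2 show ?case by simp
next
  case (rel u v g h)
  have 1: "ceq ((w@u) @ [(h, False), (g, True), (h, True)] @ v)
                   ((w@u) @ [(inv h \<otimes> g \<otimes> h, True)] @ v)"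
    by (rule cgroup_eq.rel) (use rel in auto)
  have 2: "ceq (u @ [(h, False), (g, True), (h, True)] @ (v@w))
                   (u @ [(inv h \<otimes> g \<otimes> h, True)] @ (v@w))"
    by (rule cgroup_eq.rel) (use rel in auto)
  from 1 2 show ?case by simp
qed

lemma ceq_app2: "ceq a a' \<Longrightarrow> ceq b b' \<Longrightarrow> ceq (a @ b) (a' @ b')"
proof -
  assume 1: "ceq a a'" and 2: "ceq b b'"
  have "b \<in> W" "a' \<in> W" using ceq_W 1 2 by auto
  then have "ceq (a@b) (a'@b)" "ceq (a'@b) (a'@b')" using ceq_app 1 2 by auto
  then show ?thesis by (rule cgroup_eq.trans)
qed

definition cls :: "('a \<times> bool) list \<Rightarrow> ('a \<times> bool) list set" where
  "cls w = R `` {w}"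

lemma cls_eq_iff: "u \<in> W \<Longrightarrow> v \<in> W \<Longrightarrow> cls u = cls v \<longleftrightarrow> ceq u v"
  unfolding cls_def using eq_equiv_class_iff[OF equiv_R] by (auto simp: cgroup_rel_def)

lemma cls_eqI: "ceq u v \<Longrightarrow> cls u = cls v"
  using cls_eq_iff ceq_W by blast

lemma carrier_CG: "carrier CG = cls ` W"
  by (auto simp: C_group_def quotient_def cls_def)

lemma mem_cls: "x \<in> cls u \<longleftrightarrow> ceq u x"
  by (auto simp: cls_def cgroup_rel_def)

lemma mult_cls: "u \<in> W \<Longrightarrow> v \<in> W \<Longrightarrow> cls u \<otimes>\<^bsub>CG\<^esub> cls v = cls (u @ v)"
proof -
  assume u: "u \<in> W" and v: "v \<in> W"
  have "R `` {x @ y} = cls (u @ v)" if "x \<in> cls u" "y \<in> cls v" for x y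
  proof -
    have "ceq u x" "ceq v y" using that by (simp_all add: mem_cls)
    then have "ceq (u@v) (x@y)" by (rule ceq_app2)
    then have "cls (x@y) = cls (u@v)" by (rule cls_eqI[OF cgroup_eq.sym])
    then show ?thesis by (simp only: cls_def)
  qed
  moreover have "u \<in> cls u" "v \<in> cls v" using cgroup_eq.refl[OF u] cgroup_eq.refl[OF v] by (simp_all add: mem_cls)
  ultimately have "(\<Union>x\<in>cls u. \<Union>y\<in>cls v. R `` {x @ y}) = cls (u @ v)" by blast
  then show ?thesis by (simp add: C_group_def)
qed

lemma one_CG: "\<one>\<^bsub>CG\<^esub> = cls []"
  by (simp add: C_group_def cls_def)

definition winv :: "('a \<times> bool) list \<Rightarrow> ('a \<times> bool) list" where
  "winv w = rev (map (\<lambda>(g,b). (g, \<not> b)) w)"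

lemma winv_W: "w \<in> W \<Longrightarrow> winv w \<in> W"
  by (auto simp: winv_def)

lemma winv_cancel: "w \<in> W \<Longrightarrow> ceq (winv w @ w) []"
proof (induction w)
  case Nil then show ?case by (auto simp: winv_def intro: cgroup_eq.refl)
next
  case (Cons a w)
  obtain g b where a: "a = (g,b)" by force
  have "ceq (winv w @ [(g, \<not>b), (g, \<not>\<not>b)] @ w) (winv w @ w)"
    by (rule cgroup_eq.cancel) (use Cons a winv_W in auto)
  then have "ceq (winv (a#w) @ (a#w)) (winv w @ w)" by (simp add: a winv_def)
  moreover have "ceq (winv w @ w) []" using Cons by simp
  ultimately show ?case by (rule cgroup_eq.trans)
qed

lemma CG_group: "group CG"
proof (rule groupI)
  fix x y assume "x \<in> carrier CG" "y \<in> carrier CG"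
  then obtain u v where "u\<in>W" "v\<in>W" "x = cls u" "y = cls v" by (auto simp: carrier_CG)
  then show "x \<otimes>\<^bsub>CG\<^esub> y \<in> carrier CG"
  proof -
    have "u @ v \<in> W" using \<open>u\<in>W\<close> \<open>v\<in>W\<close> by simp
    then show ?thesis using \<open>u\<in>W\<close> \<open>v\<in>W\<close> \<open>x = cls u\<close> \<open>y = cls v\<close> mult_cls carrier_CG by simp
  qed
next
  show "\<one>\<^bsub>CG\<^esub> \<in> carrier CG" by (auto simp: carrier_CG one_CG)
next
  fix x y z assume "x \<in> carrier CG" "y \<in> carrier CG" "z \<in> carrier CG"
  then obtain u v t where uvt: "u\<in>W" "v\<in>W" "t\<in>W" "x = cls u" "y = cls v" "z = cls t" by (auto simp: carrier_CG)
  have "u @ v \<in> W" "v @ t \<in> W" using uvt by auto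
  then show "x \<otimes>\<^bsub>CG\<^esub> y \<otimes>\<^bsub>CG\<^esub> z = x \<otimes>\<^bsub>CG\<^esub> (y \<otimes>\<^bsub>CG\<^esub> z)"
    using uvt by (simp add: mult_cls)
next
  fix x assume "x \<in> carrier CG"
  then obtain u where "u\<in>W" "x = cls u" by (auto simp: carrier_CG)
  then show "\<one>\<^bsub>CG\<^esub> \<otimes>\<^bsub>CG\<^esub> x = x"
    using mult_cls[of "[]" u] by (simp add: one_CG)
next
  fix x assume "x \<in> carrier CG"
  then obtain w where w: "w \<in> W" "x = cls w" by (auto simp: carrier_CG)
  then have "cls (winv w) \<otimes>\<^bsub>CG\<^esub> x = cls (winv w @ w)"
    using winv_W by (simp add: mult_cls)
  also have "\<dots> = \<one>\<^bsub>CG\<^esub>" using cls_eqI[OF winv_cancel[OF w(1)]] by (simp add: one_CG)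
  finally have "cls (winv w) \<otimes>\<^bsub>CG\<^esub> x = \<one>\<^bsub>CG\<^esub>" .
  moreover have "cls (winv w) \<in> carrier CG" using w winv_W by (auto simp: carrier_CG)
  ultimately show "\<exists>y\<in>carrier CG. y \<otimes>\<^bsub>CG\<^esub> x = \<one>\<^bsub>CG\<^esub>" by blast
qed

end


definition ev :: "('c,'d) monoid_scheme \<Rightarrow> ('a \<Rightarrow> 'c) \<Rightarrow> ('a \<times> bool) list \<Rightarrow> 'c" where
  "ev H f w = foldr (\<lambda>(g,b) acc. (if b then f g else inv\<^bsub>H\<^esub> (f g)) \<otimes>\<^bsub>H\<^esub> acc) w \<one>\<^bsub>H\<^esub>"

lemma ev_Nil[simp]: "ev H f [] = \<one>\<^bsub>H\<^esub>" by (simp add: ev_def)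
lemma ev_Cons[simp]: "ev H f ((g,b)#w) = (if b then f g else inv\<^bsub>H\<^esub> (f g)) \<otimes>\<^bsub>H\<^esub> ev H f w"
  by (simp add: ev_def)

context cgrp begin

definition good :: "('c,'d) monoid_scheme \<Rightarrow> ('a \<Rightarrow> 'c) \<Rightarrow> bool" where
  "good H f \<longleftrightarrow> group H \<and> f ` Oc \<subseteq> carrier H \<and>
     (\<forall>g\<in>Oc. \<forall>h\<in>Oc. inv\<^bsub>H\<^esub> (f h) \<otimes>\<^bsub>H\<^esub> f g \<otimes>\<^bsub>H\<^esub> f h = f (inv h \<otimes> g \<otimes> h))"

lemma ev_closed: "good H f \<Longrightarrow> w \<in> W \<Longrightarrow> ev H f w \<in> carrier H"
proof (induction w)
  case (Cons a w)
  obtain g b where a: "a = (g,b)" by force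
  interpret H: group H using Cons by (simp add: good_def)
  have "f g \<in> carrier H" using Cons a by (auto simp: good_def)
  then show ?case using Cons a by auto
qed (simp add: good_def group.is_monoid monoid.one_closed)

lemma ev_append: "good H f \<Longrightarrow> u \<in> W \<Longrightarrow> v \<in> W \<Longrightarrow> ev H f (u @ v) = ev H f u \<otimes>\<^bsub>H\<^esub> ev H f v"
proof (induction u)
  case Nil
  interpret H: group H using Nil by (simp add: good_def)
  show ?case using ev_closed[OF Nil(1,3)] by simp
next
  case (Cons a u)
  obtain g b where a: "a = (g,b)" by force
  interpret H: group H using Cons by (simp add: good_def)
  have "f g \<in> carrier H" using Cons a by (auto simp: good_def)
  then show ?case using Cons a ev_closed[OF Cons(2)] by (auto simp: H.m_assoc)
qed

lemma ev_resp: "ceq u v \<Longrightarrow> good H f \<Longrightarrow> ev H f u = ev H f v"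
proof (induction rule: cgroup_eq.induct)
  case (cancel u v g b)
  interpret H: group H using cancel by (simp add: good_def)
  have fg: "f g \<in> carrier H" using cancel by (auto simp: good_def)
  have "ev H f ([(g, b), (g, \<not> b)] @ v) = ev H f v"
    using fg ev_closed[OF cancel(4,2)] by (auto simp: H.m_assoc[symmetric])
  then show ?case using cancel ev_append[OF cancel(4)] by simp
next
  case (rel u v g h)
  interpret H: group H using rel by (simp add: good_def)
  have fg: "f g \<in> carrier H" "f h \<in> carrier H" using rel by (auto simp: good_def)
  have c: "inv h \<otimes> g \<otimes> h \<in> Oc" using Oc_conj Oc_sub rel by auto
  have "ev H f ([(h, False), (g, True), (h, True)] @ v) = ev H f ([(inv h \<otimes> g \<otimes> h, True)] @ v)"
    using fg ev_closed[OF rel(5,2)] rel(3,4,5) by (auto simp: H.m_assoc[symmetric] good_def)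
  moreover have "[(h, False), (g, True), (h, True)] @ v \<in> W" "[(inv h \<otimes> g \<otimes> h, True)] @ v \<in> W"
    using rel c by auto
  ultimately show ?case using rel ev_append[OF rel(5) rel(1)] by simp
qed auto

definition lift :: "('c,'d) monoid_scheme \<Rightarrow> ('a \<Rightarrow> 'c) \<Rightarrow> ('a \<times> bool) list set \<Rightarrow> 'c" where
  "lift H f A = ev H f (SOME w. w \<in> A)"

lemma lift_cls: "good H f \<Longrightarrow> w \<in> W \<Longrightarrow> lift H f (cls w) = ev H f w"
proof -
  assume gd: "good H f" and w: "w \<in> W"
  have "w \<in> cls w" using w by (simp add: mem_cls cgroup_eq.refl)
  then have "(SOME w'. w' \<in> cls w) \<in> cls w" by (rule someI)
  then have "ceq w (SOME w'. w' \<in> cls w)" by (simp add: mem_cls)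
  then show ?thesis unfolding lift_def using ev_resp gd by metis
qed

lemma lift_hom: "good H f \<Longrightarrow> lift H f \<in> hom CG H"
proof (rule homI)
  fix x assume gd: "good H f" and "x \<in> carrier CG"
  then obtain w where "w \<in> W" "x = cls w" by (auto simp: carrier_CG)
  then show "lift H f x \<in> carrier H" using lift_cls[OF gd] ev_closed[OF gd] by simp
next
  fix x y assume gd: "good H f" and "x \<in> carrier CG" "y \<in> carrier CG"
  then obtain u v where uv: "u \<in> W" "x = cls u" "v \<in> W" "y = cls v" by (auto simp: carrier_CG)
  have "u @ v \<in> W" using uv by simp
  then show "lift H f (x \<otimes>\<^bsub>CG\<^esub> y) = lift H f x \<otimes>\<^bsub>H\<^esub> lift H f y"
    using uv lift_cls[OF gd] ev_append[OF gd] mult_cls by simp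
qed

end


context cgrp begin

definition y :: "'a \<Rightarrow> ('a \<times> bool) list set" where
  "y g = cls [(g, True)]"

abbreviation "psi \<equiv> lift G (\<lambda>g. g)"

lemma good_G: "good G (\<lambda>g. g)"
  unfolding good_def using Oc_sub by (auto simp: is_group)

lemma psi_hom: "psi \<in> hom CG G"
  by (rule lift_hom[OF good_G])

lemma psi_cls: "w \<in> W \<Longrightarrow> psi (cls w) = ev G (\<lambda>g. g) w"
  by (rule lift_cls[OF good_G])

lemma cls_carrier: "w \<in> W \<Longrightarrow> cls w \<in> carrier CG"
  by (simp add: carrier_CG)

lemma y_carrier: "g \<in> Oc \<Longrightarrow> y g \<in> carrier CG"
  unfolding y_def by (rule cls_carrier) simp

lemma cls_False: "g \<in> Oc \<Longrightarrow> cls [(g, False)] = inv\<^bsub>CG\<^esub> (y g)"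
proof -
  assume g: "g \<in> Oc"
  interpret C: group CG by (rule CG_group)
  have "cls [(g, False)] \<otimes>\<^bsub>CG\<^esub> y g = cls ([(g,False)] @ [(g,True)])"
    unfolding y_def using g by (intro mult_cls) auto
  also have "\<dots> = cls []"
    using cgroup_eq.cancel[of "[]" Oc "[]" g G False] g by (intro cls_eqI) simp
  finally have "cls [(g, False)] \<otimes>\<^bsub>CG\<^esub> y g = \<one>\<^bsub>CG\<^esub>" by (simp add: one_CG)
  then show ?thesis using g y_carrier cls_carrier[of "[(g,False)]"] by (intro C.inv_equality[symmetric]) auto
qed

lemma cls_Cons: "g \<in> Oc \<Longrightarrow> w \<in> W \<Longrightarrow>
   cls ((g,b)#w) = (if b then y g else inv\<^bsub>CG\<^esub> (y g)) \<otimes>\<^bsub>CG\<^esub> cls w"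
proof -
  assume g: "g \<in> Oc" and w: "w \<in> W"
  have "cls ((g,b)#w) = cls [(g,b)] \<otimes>\<^bsub>CG\<^esub> cls w"
    using mult_cls[of "[(g,b)]" w] g w by simp
  then show ?thesis using cls_False[OF g] by (cases b) (simp_all add: y_def)
qed

lemma y_rel: "g \<in> Oc \<Longrightarrow> h \<in> Oc \<Longrightarrow>
   inv\<^bsub>CG\<^esub> (y h) \<otimes>\<^bsub>CG\<^esub> y g \<otimes>\<^bsub>CG\<^esub> y h = y (inv h \<otimes> g \<otimes> h)"
proof -
  assume g: "g \<in> Oc" and h: "h \<in> Oc"
  interpret C: group CG by (rule CG_group)
  have "cls [(h, False), (g, True), (h, True)] = y (inv h \<otimes> g \<otimes> h)"
    unfolding y_def using cgroup_eq.rel[of "[]" Oc "[]" g h G] g h by (intro cls_eqI) simp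
  moreover have "cls [(h, False), (g, True), (h, True)] = inv\<^bsub>CG\<^esub> (y h) \<otimes>\<^bsub>CG\<^esub> y g \<otimes>\<^bsub>CG\<^esub> y h"
    using g h y_carrier by (simp add: cls_Cons one_CG[symmetric] C.m_assoc)
  ultimately show ?thesis by simp
qed

lemma conj_y: "w \<in> W \<Longrightarrow> g \<in> Oc \<Longrightarrow>
  inv\<^bsub>CG\<^esub> (cls w) \<otimes>\<^bsub>CG\<^esub> y g \<otimes>\<^bsub>CG\<^esub> cls w
    = y (inv (ev G (\<lambda>g. g) w) \<otimes> g \<otimes> ev G (\<lambda>g. g) w)"
proof (induction w arbitrary: g)
  case Nil
  interpret C: group CG by (rule CG_group)
  show ?case using Nil y_carrier Oc_sub by (auto simp: one_CG[symmetric])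
next
  case (Cons l w)
  interpret C: group CG by (rule CG_group)
  obtain h b where l: "l = (h,b)" by force
  have h: "h \<in> Oc" and w: "w \<in> W" using Cons l by auto
  have hG: "h \<in> carrier G" and gG: "g \<in> carrier G" using h Cons Oc_sub by auto
  let ?e = "ev G (\<lambda>g. g) w"
  have eG: "?e \<in> carrier G" using ev_closed[OF good_G w] .
  define a where "a = (if b then y h else inv\<^bsub>CG\<^esub> (y h))"
  have a: "a \<in> carrier CG" using y_carrier[OF h] by (simp add: a_def)
  have c: "cls w \<in> carrier CG" using w by (rule cls_carrier)
  have yg: "y g \<in> carrier CG" using Cons y_carrier by auto
  have "inv\<^bsub>CG\<^esub> (cls (l#w)) \<otimes>\<^bsub>CG\<^esub> y g \<otimes>\<^bsub>CG\<^esub> cls (l#w)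
     = inv\<^bsub>CG\<^esub> (cls w) \<otimes>\<^bsub>CG\<^esub> (inv\<^bsub>CG\<^esub> a \<otimes>\<^bsub>CG\<^esub> y g \<otimes>\<^bsub>CG\<^esub> a) \<otimes>\<^bsub>CG\<^esub> cls w"
    using cls_Cons[OF h w, of b] a c yg by (simp add: l a_def[symmetric] C.inv_mult_group C.m_assoc)
  show ?case
  proof (cases b)
    case True
    have g1: "inv h \<otimes> g \<otimes> h \<in> Oc" using Oc_conj Cons hG by auto
    have "inv\<^bsub>CG\<^esub> a \<otimes>\<^bsub>CG\<^esub> y g \<otimes>\<^bsub>CG\<^esub> a = y (inv h \<otimes> g \<otimes> h)"
      using y_rel[OF _ h] Cons True by (simp add: a_def)
    then have "inv\<^bsub>CG\<^esub> (cls (l#w)) \<otimes>\<^bsub>CG\<^esub> y g \<otimes>\<^bsub>CG\<^esub> cls (l#w)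
       = y (inv ?e \<otimes> (inv h \<otimes> g \<otimes> h) \<otimes> ?e)"
      using \<open>inv\<^bsub>CG\<^esub> (cls (l#w)) \<otimes>\<^bsub>CG\<^esub> y g \<otimes>\<^bsub>CG\<^esub> cls (l#w) = _\<close> Cons.IH[OF w g1] by simp
    moreover have "inv ?e \<otimes> (inv h \<otimes> g \<otimes> h) \<otimes> ?e
        = inv (ev G (\<lambda>g. g) (l#w)) \<otimes> g \<otimes> ev G (\<lambda>g. g) (l#w)"
      using hG gG eG True by (simp add: l inv_mult_group m_assoc)
    ultimately show ?thesis by simp
  next
    case False
    have g2: "h \<otimes> g \<otimes> inv h \<in> Oc" using Oc_conj[of g "inv h"] Cons hG by auto
    have "inv\<^bsub>CG\<^esub> (y h) \<otimes>\<^bsub>CG\<^esub> y (h \<otimes> g \<otimes> inv h) \<otimes>\<^bsub>CG\<^esub> y h = y (inv h \<otimes> (h \<otimes> g \<otimes> inv h) \<otimes> h)"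
      using y_rel[OF g2 h] .
    also have "inv h \<otimes> (h \<otimes> g \<otimes> inv h) \<otimes> h = g" using hG gG by (simp add: m_assoc, simp add: m_assoc[symmetric])
    finally have E: "inv\<^bsub>CG\<^esub> (y h) \<otimes>\<^bsub>CG\<^esub> y (h \<otimes> g \<otimes> inv h) \<otimes>\<^bsub>CG\<^esub> y h = y g" .
    have yh: "y h \<in> carrier CG" and y2: "y (h \<otimes> g \<otimes> inv h) \<in> carrier CG" using y_carrier h g2 by auto
    have "inv\<^bsub>CG\<^esub> a \<otimes>\<^bsub>CG\<^esub> y g \<otimes>\<^bsub>CG\<^esub> a = y (h \<otimes> g \<otimes> inv h)"
      using False yh y2 by (simp add: a_def E[symmetric] C.m_assoc, simp add: C.m_assoc[symmetric])
    then have "inv\<^bsub>CG\<^esub> (cls (l#w)) \<otimes>\<^bsub>CG\<^esub> y g \<otimes>\<^bsub>CG\<^esub> cls (l#w)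
       = y (inv ?e \<otimes> (h \<otimes> g \<otimes> inv h) \<otimes> ?e)"
      using \<open>inv\<^bsub>CG\<^esub> (cls (l#w)) \<otimes>\<^bsub>CG\<^esub> y g \<otimes>\<^bsub>CG\<^esub> cls (l#w) = _\<close> Cons.IH[OF w g2] by simp
    moreover have "inv ?e \<otimes> (h \<otimes> g \<otimes> inv h) \<otimes> ?e
        = inv (ev G (\<lambda>g. g) (l#w)) \<otimes> g \<otimes> ev G (\<lambda>g. g) (l#w)"
      using hG gG eG False by (simp add: l inv_mult_group m_assoc)
    ultimately show ?thesis by simp
  qed
qed

lemma central:
  assumes z: "z \<in> carrier CG" and pz: "psi z = \<one>" and x: "x \<in> carrier CG"
  shows "z \<otimes>\<^bsub>CG\<^esub> x = x \<otimes>\<^bsub>CG\<^esub> z"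
proof -
  interpret C: group CG by (rule CG_group)
  obtain wz where wz: "wz \<in> W" "z = cls wz" using z by (auto simp: carrier_CG)
  have ev1: "ev G (\<lambda>g. g) wz = \<one>" using pz wz psi_cls by simp
  have cy: "y g \<otimes>\<^bsub>CG\<^esub> z = z \<otimes>\<^bsub>CG\<^esub> y g" if g: "g \<in> Oc" for g
  proof -
    have yg: "y g \<in> carrier CG" using y_carrier g .
    have "inv\<^bsub>CG\<^esub> z \<otimes>\<^bsub>CG\<^esub> y g \<otimes>\<^bsub>CG\<^esub> z = y g"
      using conj_y[OF wz(1) g] ev1 wz g Oc_sub by auto
    then have "z \<otimes>\<^bsub>CG\<^esub> (inv\<^bsub>CG\<^esub> z \<otimes>\<^bsub>CG\<^esub> y g \<otimes>\<^bsub>CG\<^esub> z) = z \<otimes>\<^bsub>CG\<^esub> y g" by simp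
    then show ?thesis using z yg by (simp add: C.m_assoc[symmetric])
  qed
  have ciy: "inv\<^bsub>CG\<^esub> (y g) \<otimes>\<^bsub>CG\<^esub> z = z \<otimes>\<^bsub>CG\<^esub> inv\<^bsub>CG\<^esub> (y g)" if g: "g \<in> Oc" for g
  proof -
    have yg: "y g \<in> carrier CG" using y_carrier g .
    have "inv\<^bsub>CG\<^esub> (y g) \<otimes>\<^bsub>CG\<^esub> z = inv\<^bsub>CG\<^esub> (y g) \<otimes>\<^bsub>CG\<^esub> (z \<otimes>\<^bsub>CG\<^esub> y g) \<otimes>\<^bsub>CG\<^esub> inv\<^bsub>CG\<^esub> (y g)"
      using yg z by (simp add: C.m_assoc)
    also have "\<dots> = inv\<^bsub>CG\<^esub> (y g) \<otimes>\<^bsub>CG\<^esub> (y g \<otimes>\<^bsub>CG\<^esub> z) \<otimes>\<^bsub>CG\<^esub> inv\<^bsub>CG\<^esub> (y g)"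
      using cy[OF g] by simp
    also have "\<dots> = z \<otimes>\<^bsub>CG\<^esub> inv\<^bsub>CG\<^esub> (y g)"
      using yg z by (simp add: C.m_assoc[symmetric])
    finally show ?thesis .
  qed
  obtain w where w: "w \<in> W" "x = cls w" using x by (auto simp: carrier_CG)
  have "z \<otimes>\<^bsub>CG\<^esub> cls w = cls w \<otimes>\<^bsub>CG\<^esub> z" using w(1)
  proof (induction w)
    case Nil then show ?case using z by (simp add: one_CG[symmetric])
  next
    case (Cons l w)
    obtain g b where l: "l = (g,b)" by force
    have g: "g \<in> Oc" and ww: "w \<in> W" using Cons l by auto
    have c: "cls w \<in> carrier CG" using ww by (rule cls_carrier)
    have yg: "y g \<in> carrier CG" using y_carrier g .
    have ih: "z \<otimes>\<^bsub>CG\<^esub> cls w = cls w \<otimes>\<^bsub>CG\<^esub> z" using Cons.IH ww by simp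
    show ?case
    proof (cases b)
      case True
      have "z \<otimes>\<^bsub>CG\<^esub> (y g \<otimes>\<^bsub>CG\<^esub> cls w) = y g \<otimes>\<^bsub>CG\<^esub> z \<otimes>\<^bsub>CG\<^esub> cls w"
        using cy[OF g] yg z c by (simp add: C.m_assoc[symmetric])
      also have "\<dots> = y g \<otimes>\<^bsub>CG\<^esub> cls w \<otimes>\<^bsub>CG\<^esub> z"
        using ih yg z c by (simp add: C.m_assoc)
      finally show ?thesis using cls_Cons[OF g ww, of b] True l by simp
    next
      case False
      have "z \<otimes>\<^bsub>CG\<^esub> (inv\<^bsub>CG\<^esub> (y g) \<otimes>\<^bsub>CG\<^esub> cls w) = inv\<^bsub>CG\<^esub> (y g) \<otimes>\<^bsub>CG\<^esub> z \<otimes>\<^bsub>CG\<^esub> cls w"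
        using ciy[OF g] yg z c by (simp add: C.m_assoc[symmetric])
      also have "\<dots> = inv\<^bsub>CG\<^esub> (y g) \<otimes>\<^bsub>CG\<^esub> cls w \<otimes>\<^bsub>CG\<^esub> z"
        using ih yg z c by (simp add: C.m_assoc)
      finally show ?thesis using cls_Cons[OF g ww, of b] False l by simp
    qed
  qed
  then show ?thesis using w by simp
qed

end


locale cmain = cgrp +
  assumes gen: "generate G Oc = carrier G"
    and perf: "derived G (carrier G) = carrier G"
begin

abbreviation "DD \<equiv> derived CG (carrier CG)"

lemma CG_hom: "group_hom CG G psi"
  by (intro group_hom.intro group_hom_axioms.intro CG_group is_group psi_hom)

lemma psi_y: "g \<in> Oc \<Longrightarrow> psi (y g) = g"
  unfolding y_def using psi_cls[of "[(g,True)]"] Oc_sub by auto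

lemma psi_surj: "psi ` carrier CG = carrier G"
proof
  interpret P: group_hom CG G psi by (rule CG_hom)
  show "psi ` carrier CG \<subseteq> carrier G" by auto
  have Osub: "Oc \<subseteq> psi ` carrier CG"
  proof
    fix g assume g: "g \<in> Oc" show "g \<in> psi ` carrier CG"
      by (rule image_eqI[of _ psi "y g"]) (simp_all add: psi_y[OF g] y_carrier[OF g])
  qed
  then show "carrier G \<subseteq> psi ` carrier CG"
    using generate_subgroup_incl[OF Osub P.img_is_subgroup] gen by simp
qed

lemma psi_D: "psi ` DD = carrier G"
proof -
  interpret P: group_hom CG G psi by (rule CG_hom)
  have "derived G (psi ` carrier CG) = psi ` DD" by (rule P.derived_img) simp
  then show ?thesis using psi_surj perf by simp
qed

lemma D_normal: "DD \<lhd> CG"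
proof -
  interpret C: group CG by (rule CG_group)
  show ?thesis by (rule C.derived_is_normal[OF C.normal_self])
qed

lemma in_conj_class: "g \<in> carrier G \<Longrightarrow> g \<in> conj_class G g"
  unfolding conj_class_def by (rule CollectI, rule exI[of _ \<one>]) simp

lemma conj_class_conj: "g \<in> carrier G \<Longrightarrow> h \<in> carrier G \<Longrightarrow> conj_class G (inv h \<otimes> g \<otimes> h) = conj_class G g"
proof
  assume g: "g \<in> carrier G" and h: "h \<in> carrier G"
  show "conj_class G (inv h \<otimes> g \<otimes> h) \<subseteq> conj_class G g"
  proof
    fix x assume "x \<in> conj_class G (inv h \<otimes> g \<otimes> h)"
    then obtain k where k: "k \<in> carrier G" "x = inv k \<otimes> (inv h \<otimes> g \<otimes> h) \<otimes> k" by (auto simp: conj_class_def)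
    then have "x = inv (h \<otimes> k) \<otimes> g \<otimes> (h \<otimes> k)" using g h by (simp add: m_assoc inv_mult_group)
    then show "x \<in> conj_class G g" unfolding conj_class_def using h k by blast
  qed
  show "conj_class G g \<subseteq> conj_class G (inv h \<otimes> g \<otimes> h)"
  proof
    fix x assume "x \<in> conj_class G g"
    then obtain k where k: "k \<in> carrier G" "x = inv k \<otimes> g \<otimes> k" by (auto simp: conj_class_def)
    then have "x = inv (inv h \<otimes> k) \<otimes> (inv h \<otimes> g \<otimes> h) \<otimes> (inv h \<otimes> k)" using g h
      by (simp add: m_assoc inv_mult_group, simp add: m_assoc[symmetric])
    then show "x \<in> conj_class G (inv h \<otimes> g \<otimes> h)" unfolding conj_class_def using h k by blast
  qed
qed

definition rep :: "'a \<Rightarrow> 'a" where "rep g = (SOME r. r \<in> conj_class G g)"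

lemma rep_in: "g \<in> carrier G \<Longrightarrow> rep g \<in> conj_class G g"
  unfolding rep_def by (rule someI[of _ g]) (rule in_conj_class)

lemma rep_Oc: "g \<in> Oc \<Longrightarrow> rep g \<in> Oc"
proof -
  assume g: "g \<in> Oc"
  then have "rep g \<in> conj_class G g" using rep_in Oc_sub by auto
  then obtain h where "h \<in> carrier G" "rep g = inv h \<otimes> g \<otimes> h" by (auto simp: conj_class_def)
  then show ?thesis using Oc_conj g by simp
qed

lemma rep_conj: "g \<in> carrier G \<Longrightarrow> h \<in> carrier G \<Longrightarrow> rep (inv h \<otimes> g \<otimes> h) = rep g"
  unfolding rep_def by (subst conj_class_conj) simp_all

definition dd :: "'a \<Rightarrow> ('a \<times> bool) list set" where
  "dd r = (SOME d. d \<in> DD \<and> psi d = r)"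

lemma dd: "r \<in> carrier G \<Longrightarrow> dd r \<in> DD \<and> psi (dd r) = r"
proof -
  assume r: "r \<in> carrier G"
  then have "r \<in> psi ` DD" using psi_D by simp
  then obtain d where "d \<in> DD" "psi d = r" by (auto simp del: psi_D)
  then have "\<exists>d. d \<in> DD \<and> psi d = r" by blast
  then show ?thesis unfolding dd_def by (rule someI_ex)
qed

definition f :: "'a \<Rightarrow> ('a \<times> bool) list set" where
  "f g = y (rep g) \<otimes>\<^bsub>CG\<^esub> inv\<^bsub>CG\<^esub> (dd (rep g))"

lemma D_sub: "DD \<subseteq> carrier CG"
  using D_normal by (simp add: normal_def subgroup.subset)

lemma f_carrier: "g \<in> Oc \<Longrightarrow> f g \<in> carrier CG"
proof -
  assume g: "g \<in> Oc"
  interpret C: group CG by (rule CG_group)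
  have "rep g \<in> carrier G" using rep_Oc g Oc_sub by auto
  then have "dd (rep g) \<in> carrier CG" using dd D_sub by auto
  then show ?thesis unfolding f_def using y_carrier rep_Oc g by auto
qed

lemma psi_f: "g \<in> Oc \<Longrightarrow> psi (f g) = \<one>"
proof -
  assume g: "g \<in> Oc"
  interpret P: group_hom CG G psi by (rule CG_hom)
  have r: "rep g \<in> Oc" "rep g \<in> carrier G" using rep_Oc g Oc_sub by auto
  then have d: "dd (rep g) \<in> carrier CG" "psi (dd (rep g)) = rep g" using dd D_sub by auto
  show ?thesis unfolding f_def using r d y_carrier psi_y by simp
qed

lemma f_central: "g \<in> Oc \<Longrightarrow> x \<in> carrier CG \<Longrightarrow> f g \<otimes>\<^bsub>CG\<^esub> x = x \<otimes>\<^bsub>CG\<^esub> f g"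
  by (rule central[OF f_carrier psi_f])

lemma good_f: "good CG f"
  unfolding good_def
proof (intro conjI ballI)
  interpret C: group CG by (rule CG_group)
  show "group CG" by (rule CG_group)
  show "f ` Oc \<subseteq> carrier CG" using f_carrier by auto
  fix g h assume g: "g \<in> Oc" and h: "h \<in> Oc"
  have "inv\<^bsub>CG\<^esub> (f h) \<otimes>\<^bsub>CG\<^esub> f g \<otimes>\<^bsub>CG\<^esub> f h = inv\<^bsub>CG\<^esub> (f h) \<otimes>\<^bsub>CG\<^esub> (f h \<otimes>\<^bsub>CG\<^esub> f g)"
    using f_central[OF g, of "f h"] f_carrier g h by (simp add: C.m_assoc)
  also have "\<dots> = f g" using f_carrier g h by (simp add: C.m_assoc[symmetric])
  also have "rep (inv h \<otimes> g \<otimes> h) = rep g" using rep_conj g h Oc_sub by auto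
  then have "f g = f (inv h \<otimes> g \<otimes> h)" unfolding f_def by simp
  finally show "inv\<^bsub>CG\<^esub> (f h) \<otimes>\<^bsub>CG\<^esub> f g \<otimes>\<^bsub>CG\<^esub> f h = f (inv h \<otimes> g \<otimes> h)" .
qed

abbreviation "sigma \<equiv> lift CG f"

lemma sigma_hom: "sigma \<in> hom CG CG"
  by (rule lift_hom[OF good_f])

lemma sigma_y: "g \<in> Oc \<Longrightarrow> sigma (y g) = f g"
proof -
  assume g: "g \<in> Oc"
  interpret C: group CG by (rule CG_group)
  show ?thesis unfolding y_def using lift_cls[OF good_f, of "[(g,True)]"] g f_carrier by simp
qed

lemma psi_sigma: "x \<in> carrier CG \<Longrightarrow> psi (sigma x) = \<one>"
proof -
  assume x: "x \<in> carrier CG"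
  interpret C: group CG by (rule CG_group)
  interpret P: group_hom CG G psi by (rule CG_hom)
  obtain w where w: "w \<in> W" "x = cls w" using x by (auto simp: carrier_CG)
  have "psi (ev CG f w) = \<one>" using w(1)
  proof (induction w)
    case Nil then show ?case by simp
  next
    case (Cons l w)
    obtain g b where l: "l = (g,b)" by force
    have g: "g \<in> Oc" and ww: "w \<in> W" using Cons l by auto
    have e: "ev CG f w \<in> carrier CG" using ev_closed[OF good_f ww] .
    have ih: "psi (ev CG f w) = \<one>" using Cons.IH ww by simp
    show ?case using l e ih f_carrier[OF g] psi_f[OF g] by simp
  qed
  then show ?thesis using w lift_cls[OF good_f] by simp
qed

lemma sigma_carrier: "x \<in> carrier CG \<Longrightarrow> sigma x \<in> carrier CG"
  using sigma_hom by (simp add: hom_def Pi_def)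

lemma sigma_central: "x \<in> carrier CG \<Longrightarrow> u \<in> carrier CG \<Longrightarrow> sigma x \<otimes>\<^bsub>CG\<^esub> u = u \<otimes>\<^bsub>CG\<^esub> sigma x"
  by (rule central[OF sigma_carrier psi_sigma])

lemma sigma_D: "d \<in> DD \<Longrightarrow> sigma d = \<one>\<^bsub>CG\<^esub>"
proof -
  assume d: "d \<in> DD"
  interpret C: group CG by (rule CG_group)
  interpret S: group_hom CG CG sigma by (intro group_hom.intro group_hom_axioms.intro CG_group sigma_hom)
  have "derived_set CG (carrier CG) \<subseteq> kernel CG CG sigma"
  proof
    fix x assume "x \<in> derived_set CG (carrier CG)"
    then obtain h1 h2 where h: "h1 \<in> carrier CG" "h2 \<in> carrier CG"
      "x = h1 \<otimes>\<^bsub>CG\<^esub> h2 \<otimes>\<^bsub>CG\<^esub> inv\<^bsub>CG\<^esub> h1 \<otimes>\<^bsub>CG\<^esub> inv\<^bsub>CG\<^esub> h2" by blast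
    have s: "sigma h1 \<in> carrier CG" "sigma h2 \<in> carrier CG" using h sigma_carrier by auto
    have "sigma x = sigma h1 \<otimes>\<^bsub>CG\<^esub> sigma h2 \<otimes>\<^bsub>CG\<^esub> inv\<^bsub>CG\<^esub> sigma h1 \<otimes>\<^bsub>CG\<^esub> inv\<^bsub>CG\<^esub> sigma h2"
      using h by simp
    also have "\<dots> = sigma h2 \<otimes>\<^bsub>CG\<^esub> sigma h1 \<otimes>\<^bsub>CG\<^esub> inv\<^bsub>CG\<^esub> sigma h1 \<otimes>\<^bsub>CG\<^esub> inv\<^bsub>CG\<^esub> sigma h2"
      using sigma_central[OF h(1) s(2)] by simp
    also have "\<dots> = \<one>\<^bsub>CG\<^esub>" using s by (simp add: C.m_assoc)
    finally show "x \<in> kernel CG CG sigma" using h by (simp add: kernel_def)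
  qed
  then have "DD \<subseteq> kernel CG CG sigma"
    unfolding derived_def by (rule C.generate_subgroup_incl[OF _ S.subgroup_kernel])
  then show ?thesis using d by (auto simp: kernel_def)
qed

end


lemma (in group) cancel_l1[simp]: "x \<in> carrier G \<Longrightarrow> y \<in> carrier G \<Longrightarrow> x \<otimes> (inv x \<otimes> y) = y"
  by (simp add: m_assoc[symmetric])
lemma (in group) cancel_l2[simp]: "x \<in> carrier G \<Longrightarrow> y \<in> carrier G \<Longrightarrow> inv x \<otimes> (x \<otimes> y) = y"
  by (simp add: m_assoc[symmetric])

context cmain begin

lemma D_sg: "subgroup DD CG"
  using D_normal by (simp add: normal_def)

lemma gen_mod: "g \<in> Oc \<Longrightarrow> inv\<^bsub>CG\<^esub> (y g) \<otimes>\<^bsub>CG\<^esub> f g \<in> DD"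
proof -
  assume g: "g \<in> Oc"
  interpret C: group CG by (rule CG_group)
  interpret N: normal DD CG by (rule D_normal)
  have gG: "g \<in> carrier G" using g Oc_sub by auto
  let ?r = "rep g"
  have "?r \<in> conj_class G g" using rep_in gG by simp
  then obtain k where k: "k \<in> carrier G" "?r = inv k \<otimes> g \<otimes> k" by (auto simp: conj_class_def)
  obtain c where c: "c \<in> carrier CG" "psi c = k" using k(1) psi_surj by (metis imageE)
  obtain w where w: "w \<in> W" "c = cls w" using c(1) by (auto simp: carrier_CG)
  have "inv\<^bsub>CG\<^esub> c \<otimes>\<^bsub>CG\<^esub> y g \<otimes>\<^bsub>CG\<^esub> c = y (inv k \<otimes> g \<otimes> k)"
    using conj_y[OF w(1) g] psi_cls[OF w(1)] w c by simp
  then have yr: "y ?r = inv\<^bsub>CG\<^esub> c \<otimes>\<^bsub>CG\<^esub> y g \<otimes>\<^bsub>CG\<^esub> c" using k by simp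
  have rG: "?r \<in> carrier G" using rep_Oc g Oc_sub by auto
  have d: "dd ?r \<in> DD" using dd[OF rG] by simp
  have dC: "dd ?r \<in> carrier CG" using d D_sub by auto
  have yg: "y g \<in> carrier CG" using y_carrier g .
  have "inv\<^bsub>CG\<^esub> (y g) \<otimes>\<^bsub>CG\<^esub> inv\<^bsub>CG\<^esub> c \<otimes>\<^bsub>CG\<^esub> inv\<^bsub>CG\<^esub> (inv\<^bsub>CG\<^esub> (y g)) \<otimes>\<^bsub>CG\<^esub> inv\<^bsub>CG\<^esub> (inv\<^bsub>CG\<^esub> c)
     \<in> derived_set CG (carrier CG)"
    using yg c(1) by blast
  then have comm: "inv\<^bsub>CG\<^esub> (y g) \<otimes>\<^bsub>CG\<^esub> inv\<^bsub>CG\<^esub> c \<otimes>\<^bsub>CG\<^esub> y g \<otimes>\<^bsub>CG\<^esub> c \<in> DD"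
    using yg c(1) unfolding derived_def by (simp add: generate.incl)
  have "inv\<^bsub>CG\<^esub> (y g) \<otimes>\<^bsub>CG\<^esub> f g
     = (inv\<^bsub>CG\<^esub> (y g) \<otimes>\<^bsub>CG\<^esub> inv\<^bsub>CG\<^esub> c \<otimes>\<^bsub>CG\<^esub> y g \<otimes>\<^bsub>CG\<^esub> c) \<otimes>\<^bsub>CG\<^esub> inv\<^bsub>CG\<^esub> (dd ?r)"
    unfolding f_def yr using yg c(1) dC by (simp add: C.m_assoc)
  also have "\<dots> \<in> DD" using comm d by (simp add: N.m_closed N.m_inv_closed)
  finally show ?thesis .
qed

lemma sigma_inv_central: "x \<in> carrier CG \<Longrightarrow> u \<in> carrier CG \<Longrightarrow>
  inv\<^bsub>CG\<^esub> (sigma x) \<otimes>\<^bsub>CG\<^esub> u = u \<otimes>\<^bsub>CG\<^esub> inv\<^bsub>CG\<^esub> (sigma x)"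
proof -
  assume x: "x \<in> carrier CG" and u: "u \<in> carrier CG"
  interpret C: group CG by (rule CG_group)
  have s: "sigma x \<in> carrier CG" using sigma_carrier x .
  have "inv\<^bsub>CG\<^esub> (sigma x) \<otimes>\<^bsub>CG\<^esub> u = inv\<^bsub>CG\<^esub> (sigma x) \<otimes>\<^bsub>CG\<^esub> (u \<otimes>\<^bsub>CG\<^esub> sigma x) \<otimes>\<^bsub>CG\<^esub> inv\<^bsub>CG\<^esub> (sigma x)"
    using s u by (simp add: C.m_assoc)
  also have "\<dots> = inv\<^bsub>CG\<^esub> (sigma x) \<otimes>\<^bsub>CG\<^esub> (sigma x \<otimes>\<^bsub>CG\<^esub> u) \<otimes>\<^bsub>CG\<^esub> inv\<^bsub>CG\<^esub> (sigma x)"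
    using sigma_central[OF x u] by simp
  also have "\<dots> = u \<otimes>\<^bsub>CG\<^esub> inv\<^bsub>CG\<^esub> (sigma x)" using s u by simp
  finally show ?thesis .
qed

lemma sig_mod: "x \<in> carrier CG \<Longrightarrow> inv\<^bsub>CG\<^esub> x \<otimes>\<^bsub>CG\<^esub> sigma x \<in> DD"
proof -
  assume x: "x \<in> carrier CG"
  interpret C: group CG by (rule CG_group)
  interpret N: normal DD CG by (rule D_normal)
  interpret S: group_hom CG CG sigma by (intro group_hom.intro group_hom_axioms.intro CG_group sigma_hom)
  obtain w where w: "w \<in> W" "x = cls w" using x by (auto simp: carrier_CG)
  have "inv\<^bsub>CG\<^esub> (cls w) \<otimes>\<^bsub>CG\<^esub> sigma (cls w) \<in> DD" using w(1)
  proof (induction w)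
    case Nil then show ?case by (simp add: one_CG[symmetric] N.one_closed)
  next
    case (Cons l w)
    obtain g b where l: "l = (g,b)" by force
    have g: "g \<in> Oc" and ww: "w \<in> W" using Cons l by auto
    have ih: "inv\<^bsub>CG\<^esub> (cls w) \<otimes>\<^bsub>CG\<^esub> sigma (cls w) \<in> DD" using Cons.IH ww by simp
    have c: "cls w \<in> carrier CG" using ww by (rule cls_carrier)
    have yg: "y g \<in> carrier CG" using y_carrier g .
    have fg: "f g \<in> carrier CG" using f_carrier g .
    define a where "a = (if b then y g else inv\<^bsub>CG\<^esub> (y g))"
    have a: "a \<in> carrier CG" using yg by (simp add: a_def)
    have na: "inv\<^bsub>CG\<^esub> a \<otimes>\<^bsub>CG\<^esub> sigma a \<in> DD"
    proof (cases b)
      case True then show ?thesis using gen_mod[OF g] sigma_y[OF g] by (simp add: a_def)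
    next
      case False
      have "f g \<otimes>\<^bsub>CG\<^esub> inv\<^bsub>CG\<^esub> (y g) = y g \<otimes>\<^bsub>CG\<^esub> (inv\<^bsub>CG\<^esub> (y g) \<otimes>\<^bsub>CG\<^esub> f g) \<otimes>\<^bsub>CG\<^esub> inv\<^bsub>CG\<^esub> (y g)"
        using yg fg by (simp add: C.m_assoc)
      also have "\<dots> \<in> DD" using N.inv_op_closed2[OF yg gen_mod[OF g]] .
      finally have "inv\<^bsub>CG\<^esub> (f g \<otimes>\<^bsub>CG\<^esub> inv\<^bsub>CG\<^esub> (y g)) \<in> DD" by (rule N.m_inv_closed)
      then show ?thesis using False yg fg sigma_y[OF g] by (simp add: a_def C.inv_mult_group)
    qed
    have sa: "sigma a \<in> carrier CG" and sc: "sigma (cls w) \<in> carrier CG" using a c sigma_carrier by auto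
    have eq: "cls (l#w) = a \<otimes>\<^bsub>CG\<^esub> cls w" using cls_Cons[OF g ww, of b] l by (simp add: a_def)
    have "inv\<^bsub>CG\<^esub> (cls (l#w)) \<otimes>\<^bsub>CG\<^esub> sigma (cls (l#w))
       = (inv\<^bsub>CG\<^esub> (cls w) \<otimes>\<^bsub>CG\<^esub> (inv\<^bsub>CG\<^esub> a \<otimes>\<^bsub>CG\<^esub> sigma a) \<otimes>\<^bsub>CG\<^esub> cls w)
         \<otimes>\<^bsub>CG\<^esub> (inv\<^bsub>CG\<^esub> (cls w) \<otimes>\<^bsub>CG\<^esub> sigma (cls w))"
      unfolding eq using a c sa sc by (simp add: C.inv_mult_group C.m_assoc)
    also have "\<dots> \<in> DD" using N.inv_op_closed1[OF c na] ih by (rule N.m_closed)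
    finally show ?case .
  qed
  then show ?thesis using w by simp
qed

definition Phi where "Phi x = (x \<otimes>\<^bsub>CG\<^esub> inv\<^bsub>CG\<^esub> (sigma x), DD #>\<^bsub>CG\<^esub> x)"

lemma Phi_fst: "x \<in> carrier CG \<Longrightarrow> x \<otimes>\<^bsub>CG\<^esub> inv\<^bsub>CG\<^esub> (sigma x) \<in> DD"
proof -
  assume x: "x \<in> carrier CG"
  interpret C: group CG by (rule CG_group)
  interpret N: normal DD CG by (rule D_normal)
  have s: "sigma x \<in> carrier CG" using sigma_carrier x .
  have "inv\<^bsub>CG\<^esub> (inv\<^bsub>CG\<^esub> x \<otimes>\<^bsub>CG\<^esub> sigma x) \<in> DD" using sig_mod[OF x] by (rule N.m_inv_closed)
  then have "inv\<^bsub>CG\<^esub> (sigma x) \<otimes>\<^bsub>CG\<^esub> x \<in> DD" using x s by (simp add: C.inv_mult_group)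
  then show ?thesis using sigma_inv_central[OF x x] by simp
qed

lemma Phi_iso: "Phi \<in> iso CG (CG\<lparr>carrier := DD\<rparr> \<times>\<times> (CG Mod DD))"
proof -
  interpret C: group CG by (rule CG_group)
  interpret N: normal DD CG by (rule D_normal)
  interpret S: group_hom CG CG sigma by (intro group_hom.intro group_hom_axioms.intro CG_group sigma_hom)
  have hom: "Phi \<in> hom CG (CG\<lparr>carrier := DD\<rparr> \<times>\<times> (CG Mod DD))"
  proof (rule homI)
    fix x assume x: "x \<in> carrier CG"
    show "Phi x \<in> carrier (CG\<lparr>carrier := DD\<rparr> \<times>\<times> (CG Mod DD))"
      using Phi_fst[OF x] C.rcosetsI[OF D_sub x] by (simp add: Phi_def FactGroup_def)
  next
    fix x u assume x: "x \<in> carrier CG" and u: "u \<in> carrier CG"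
    have s: "sigma x \<in> carrier CG" "sigma u \<in> carrier CG" using sigma_carrier x u by auto
    have "x \<otimes>\<^bsub>CG\<^esub> u \<otimes>\<^bsub>CG\<^esub> inv\<^bsub>CG\<^esub> (sigma (x \<otimes>\<^bsub>CG\<^esub> u))
        = x \<otimes>\<^bsub>CG\<^esub> ((u \<otimes>\<^bsub>CG\<^esub> inv\<^bsub>CG\<^esub> (sigma u)) \<otimes>\<^bsub>CG\<^esub> inv\<^bsub>CG\<^esub> (sigma x))"
      using x u s by (simp add: C.inv_mult_group C.m_assoc)
    also have "\<dots> = x \<otimes>\<^bsub>CG\<^esub> (inv\<^bsub>CG\<^esub> (sigma x) \<otimes>\<^bsub>CG\<^esub> (u \<otimes>\<^bsub>CG\<^esub> inv\<^bsub>CG\<^esub> (sigma u)))"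
      using sigma_inv_central[OF x, of "u \<otimes>\<^bsub>CG\<^esub> inv\<^bsub>CG\<^esub> (sigma u)"] u s by simp
    also have "\<dots> = x \<otimes>\<^bsub>CG\<^esub> inv\<^bsub>CG\<^esub> (sigma x) \<otimes>\<^bsub>CG\<^esub> (u \<otimes>\<^bsub>CG\<^esub> inv\<^bsub>CG\<^esub> (sigma u))"
      using x u s by (simp add: C.m_assoc)
    finally have 1: "x \<otimes>\<^bsub>CG\<^esub> u \<otimes>\<^bsub>CG\<^esub> inv\<^bsub>CG\<^esub> (sigma (x \<otimes>\<^bsub>CG\<^esub> u))
        = x \<otimes>\<^bsub>CG\<^esub> inv\<^bsub>CG\<^esub> (sigma x) \<otimes>\<^bsub>CG\<^esub> (u \<otimes>\<^bsub>CG\<^esub> inv\<^bsub>CG\<^esub> (sigma u))" .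
    have 2: "DD #>\<^bsub>CG\<^esub> (x \<otimes>\<^bsub>CG\<^esub> u) = set_mult CG (DD #>\<^bsub>CG\<^esub> x) (DD #>\<^bsub>CG\<^esub> u)"
      using N.rcos_sum[OF x u] by simp
    show "Phi (x \<otimes>\<^bsub>CG\<^esub> u) = Phi x \<otimes>\<^bsub>CG\<lparr>carrier := DD\<rparr> \<times>\<times> (CG Mod DD)\<^esub> Phi u"
      unfolding Phi_def using 1 2 by (simp add: FactGroup_def)
  qed
  have inj: "inj_on Phi (carrier CG)"
  proof (rule inj_onI)
    fix x u assume x: "x \<in> carrier CG" and u: "u \<in> carrier CG" and eq: "Phi x = Phi u"
    then have cos: "DD #>\<^bsub>CG\<^esub> x = DD #>\<^bsub>CG\<^esub> u" and fs: "x \<otimes>\<^bsub>CG\<^esub> inv\<^bsub>CG\<^esub> (sigma x) = u \<otimes>\<^bsub>CG\<^esub> inv\<^bsub>CG\<^esub> (sigma u)"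
      by (simp_all add: Phi_def)
    have "x \<in> DD #>\<^bsub>CG\<^esub> u" using C.rcos_self[OF x D_sg] cos by simp
    then obtain n where n: "n \<in> DD" "x = n \<otimes>\<^bsub>CG\<^esub> u" by (auto simp: r_coset_def)
    have nC: "n \<in> carrier CG" using n D_sub by auto
    have "sigma x = sigma n \<otimes>\<^bsub>CG\<^esub> sigma u" using n nC u by simp
    then have "sigma x = sigma u" using sigma_D[OF n(1)] u sigma_carrier by simp
    then show "x = u" using fs x u sigma_carrier by simp
  qed
  have img: "Phi ` carrier CG = DD \<times> rcosets\<^bsub>CG\<^esub> DD"
  proof
    show "Phi ` carrier CG \<subseteq> DD \<times> rcosets\<^bsub>CG\<^esub> DD"
      using Phi_fst C.rcosetsI[OF D_sub] by (auto simp: Phi_def)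
  next
    show "DD \<times> rcosets\<^bsub>CG\<^esub> DD \<subseteq> Phi ` carrier CG"
    proof
      fix p assume "p \<in> DD \<times> rcosets\<^bsub>CG\<^esub> DD"
      then obtain d K where p: "p = (d, K)" "d \<in> DD" "K \<in> rcosets\<^bsub>CG\<^esub> DD" by blast
      then obtain y0 where y0: "y0 \<in> carrier CG" "K = DD #>\<^bsub>CG\<^esub> y0" by (auto simp: RCOSETS_def)
      have dC: "d \<in> carrier CG" using p D_sub by auto
      have s: "sigma y0 \<in> carrier CG" using sigma_carrier y0 by simp
      define n where "n = inv\<^bsub>CG\<^esub> y0 \<otimes>\<^bsub>CG\<^esub> sigma y0"
      have n: "n \<in> DD" unfolding n_def using sig_mod[OF y0(1)] .
      have nC: "n \<in> carrier CG" using n D_sub by auto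
      have sy: "sigma y0 = y0 \<otimes>\<^bsub>CG\<^esub> n" unfolding n_def using y0 s by simp
      have ssy: "sigma (sigma y0) = sigma y0"
        using sy y0 nC sigma_D[OF n] sigma_carrier by simp
      define x where "x = d \<otimes>\<^bsub>CG\<^esub> sigma y0"
      have xC: "x \<in> carrier CG" using dC s by (simp add: x_def)
      have sx: "sigma x = sigma y0" unfolding x_def using dC s sigma_D[OF p(2)] ssy sigma_carrier by simp
      have "x \<otimes>\<^bsub>CG\<^esub> inv\<^bsub>CG\<^esub> (sigma x) = x \<otimes>\<^bsub>CG\<^esub> inv\<^bsub>CG\<^esub> (sigma y0)"
        using sx by simp
      also have "\<dots> = d" unfolding x_def using dC s by (simp add: C.m_assoc)
      finally have f1: "x \<otimes>\<^bsub>CG\<^esub> inv\<^bsub>CG\<^esub> (sigma x) = d" .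
      have n2: "y0 \<otimes>\<^bsub>CG\<^esub> n \<otimes>\<^bsub>CG\<^esub> inv\<^bsub>CG\<^esub> y0 \<in> DD" using N.inv_op_closed2[OF y0(1) n] .
      have "sigma y0 = (y0 \<otimes>\<^bsub>CG\<^esub> n \<otimes>\<^bsub>CG\<^esub> inv\<^bsub>CG\<^esub> y0) \<otimes>\<^bsub>CG\<^esub> y0"
        using sy y0 nC by (simp add: C.m_assoc)
      then have "DD #>\<^bsub>CG\<^esub> sigma y0 = (DD #>\<^bsub>CG\<^esub> (y0 \<otimes>\<^bsub>CG\<^esub> n \<otimes>\<^bsub>CG\<^esub> inv\<^bsub>CG\<^esub> y0)) #>\<^bsub>CG\<^esub> y0"
        using C.coset_mult_assoc[OF D_sub _ y0(1)] n2 D_sub by auto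
      also have "\<dots> = DD #>\<^bsub>CG\<^esub> y0" using C.coset_join2[OF _ D_sg n2] n2 D_sub by auto
      finally have c1: "DD #>\<^bsub>CG\<^esub> sigma y0 = DD #>\<^bsub>CG\<^esub> y0" .
      have "DD #>\<^bsub>CG\<^esub> x = (DD #>\<^bsub>CG\<^esub> d) #>\<^bsub>CG\<^esub> sigma y0"
        unfolding x_def using C.coset_mult_assoc[OF D_sub dC s] by simp
      also have "\<dots> = DD #>\<^bsub>CG\<^esub> sigma y0" using C.coset_join2[OF dC D_sg p(2)] by simp
      finally have "DD #>\<^bsub>CG\<^esub> x = K" using c1 y0 by simp
      then have "Phi x = p" using f1 p by (simp add: Phi_def)
      then show "p \<in> Phi ` carrier CG" using xC by blast
    qed
  qed
  show ?thesis unfolding iso_def using hom inj img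
    by (simp add: bij_betw_def FactGroup_def)
qed

end


theorem proposition2p14:
  fixes G :: "('a, 'b) monoid_scheme" and Oc :: "'a set"
  assumes "equipped_group G Oc"
    and "generate G Oc = carrier G"
    and "perfect_group G"
  shows "C_group G Oc \<cong>
           ((C_group G Oc)\<lparr>carrier := derived (C_group G Oc) (carrier (C_group G Oc))\<rparr>
            \<times>\<times> (C_group G Oc Mod derived (C_group G Oc) (carrier (C_group G Oc))))"
proof -
  from assms(1) obtain S where grp: "group G" "Oc \<subseteq> carrier G" "S \<subseteq> carrier G"
      "Oc = (\<Union>s\<in>S. conj_class G s)"
    unfolding equipped_group_def by blast
  interpret Gg: group G by (rule grp(1))
  have conj: "inv\<^bsub>G\<^esub> h \<otimes>\<^bsub>G\<^esub> g \<otimes>\<^bsub>G\<^esub> h \<in> Oc" if g: "g \<in> Oc" and h: "h \<in> carrier G" for g h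
  proof -
    obtain s where s: "s \<in> S" "g \<in> conj_class G s" using g grp(4) by blast
    then obtain k where k: "k \<in> carrier G" "g = inv\<^bsub>G\<^esub> k \<otimes>\<^bsub>G\<^esub> s \<otimes>\<^bsub>G\<^esub> k"
      by (auto simp: conj_class_def)
    have sG: "s \<in> carrier G" using s grp(3) by auto
    have "inv\<^bsub>G\<^esub> h \<otimes>\<^bsub>G\<^esub> g \<otimes>\<^bsub>G\<^esub> h = inv\<^bsub>G\<^esub> (k \<otimes>\<^bsub>G\<^esub> h) \<otimes>\<^bsub>G\<^esub> s \<otimes>\<^bsub>G\<^esub> (k \<otimes>\<^bsub>G\<^esub> h)"
      using k h sG by (simp add: Gg.m_assoc Gg.inv_mult_group)
    then have "inv\<^bsub>G\<^esub> h \<otimes>\<^bsub>G\<^esub> g \<otimes>\<^bsub>G\<^esub> h \<in> conj_class G s"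
      unfolding conj_class_def using k h by blast
    then show ?thesis using s grp(4) by blast
  qed
  interpret M: cmain G Oc
    by (unfold_locales) (use grp conj assms(2,3) in \<open>auto simp: perfect_group_def\<close>)
  show ?thesis by (rule is_isoI[OF M.Phi_iso])
qed


end
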